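(* Let $G$ be a simple undirected graph containing the edge $\{v_1,v_2\}$, and let $G'$ be the graph obtained from $G$ by removing the edge $\{v_1,v_2\}$ (same vertex set). If $s\in(-\infty,0]\cup[1,+\infty)$, then $\rho(M_G(s))\geq \rho(M_{G'}(s))$.
   Context: For a simple undirected graph $G$ on $n$ vertices with adjacency matrix $A$, diagonal degree matrix $D$ and $n\times n$ identity matrix $I$, and a real parameter $s$, the deformed Laplacian matrix of $G$ is $M_G(s)=I-sA+s^2(D-I)$. For a real symmetric matrix $B$, $\rho(B)$ denotes its spectral radius, here meaning its largest eigenvalue $\sup_{|x|=1}\langle x,Bx\rangle$. *)

theory Defs
  imports "HOL-Analysis.Analysis"
begin

definition simple_graph :: "('n::finite \<Rightarrow> 'n \<Rightarrow> bool) \<Rightarrow> bool" where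
  "simple_graph E \<longleftrightarrow> (\<forall>i j. E i j \<longrightarrow> E j i) \<and> (\<forall>i. \<not> E i i)"

definition adj_matrix :: "('n::finite \<Rightarrow> 'n \<Rightarrow> bool) \<Rightarrow> real^'n^'n" where
  "adj_matrix E = (\<chi> i j. if E i j then 1 else 0)"

definition deg_matrix :: "('n::finite \<Rightarrow> 'n \<Rightarrow> bool) \<Rightarrow> real^'n^'n" where
  "deg_matrix E = (\<chi> i j. if i = j then real (card {k. E i k}) else 0)"

definition deformed_laplacian :: "('n::finite \<Rightarrow> 'n \<Rightarrow> bool) \<Rightarrow> real \<Rightarrow> real^'n^'n" where
  "deformed_laplacian E s = mat 1 - s *\<^sub>R adj_matrix E + (s^2) *\<^sub>R (deg_matrix E - mat 1)"

text \<open>Spectral radius in the paper's sense: largest eigenvalue, sup of the Rayleigh quotient.\<close>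
definition rho :: "real^'n^'n \<Rightarrow> real" where
  "rho B = (SUP x\<in>{x::real^'n. norm x = 1}. x \<bullet> (B *v x))"

definition delete_edge :: "('n \<Rightarrow> 'n \<Rightarrow> bool) \<Rightarrow> 'n \<Rightarrow> 'n \<Rightarrow> ('n \<Rightarrow> 'n \<Rightarrow> bool)" where
  "delete_edge E u v = (\<lambda>i j. E i j \<and> \<not> ((i = u \<and> j = v) \<or> (i = v \<and> j = u)))"

end

theory Submission
  imports Defs
begin

lemma quad_form: "x \<bullet> (B *v x) = (\<Sum>i\<in>UNIV. \<Sum>j\<in>UNIV. x$i * B$i$j * x$j)"
  by (simp add: inner_vec_def matrix_vector_mult_def sum_distrib_left mult.assoc mult.commute mult.left_commute)

lemma dl_entry: "deformed_laplacian E s $ i $ j = (if i=j then 1 else 0) - s*(if E i j then 1 else 0)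
   + s^2*((if i=j then real(card{k. E i k}) else 0) - (if i=j then 1 else 0))"
  by (simp add: deformed_laplacian_def adj_matrix_def deg_matrix_def mat_def)

lemma card_diff:
  fixes E :: "'n::finite \<Rightarrow> 'n \<Rightarrow> bool"
  assumes "simple_graph E" "E v1 v2"
  shows "real(card{k. E i k}) - real(card{k. delete_edge E v1 v2 i k}) = (if i=v1 \<or> i=v2 then 1 else 0)"
proof -
  have ne: "v1 \<noteq> v2" using assms by (auto simp: simple_graph_def)
  have sym: "E v2 v1" using assms by (auto simp: simple_graph_def)
  show ?thesis
  proof (cases "i = v1")
    case True
    have "{k. delete_edge E v1 v2 i k} = {k. E i k} - {v2}" using True ne by (auto simp: delete_edge_def)
    moreover have "v2 \<in> {k. E i k}" using True assms by auto
    moreover have "card {k. E i k} > 0" using \<open>v2 \<in> {k. E i k}\<close> by (auto simp: card_gt_0_iff)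
    ultimately show ?thesis using True by (simp add: card_Diff_singleton of_nat_diff)
  next
    case F1: False
    show ?thesis
    proof (cases "i = v2")
      case True
      have "{k. delete_edge E v1 v2 i k} = {k. E i k} - {v1}" using True ne by (auto simp: delete_edge_def)
      moreover have "v1 \<in> {k. E i k}" using True sym by auto
      moreover have "card {k. E i k} > 0" using \<open>v1 \<in> {k. E i k}\<close> by (auto simp: card_gt_0_iff)
      ultimately show ?thesis using True by (simp add: card_Diff_singleton of_nat_diff)
    next
      case False
      have "{k. delete_edge E v1 v2 i k} = {k. E i k}" using False F1 by (auto simp: delete_edge_def)
      then show ?thesis using False F1 by simp
    qed
  qed
qed

lemma entry_diff:
  fixes E :: "'n::finite \<Rightarrow> 'n \<Rightarrow> bool"
  assumes "simple_graph E" "E v1 v2"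
  shows "deformed_laplacian E s $ i $ j - deformed_laplacian (delete_edge E v1 v2) s $ i $ j
     = - s*(if (i=v1 \<and> j=v2) \<or> (i=v2 \<and> j=v1) then 1 else 0) + s^2*(if i=j \<and> (i=v1 \<or> i=v2) then 1 else 0)"
proof -
  have a: "(if E i j then 1 else 0) - (if delete_edge E v1 v2 i j then 1 else 0) = (if (i=v1 \<and> j=v2) \<or> (i=v2 \<and> j=v1) then 1 else (0::real))"
    using assms by (auto simp: delete_edge_def simple_graph_def)
  have c: "(if i=j then real(card{k. E i k}) else 0) - (if i=j then real(card{k. delete_edge E v1 v2 i k}) else 0)
     = (if i=j \<and> (i=v1 \<or> i=v2) then 1 else 0)"
    using card_diff[OF assms, of i] by auto
  show ?thesis unfolding dl_entry using a c by (simp add: algebra_simps)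
qed

lemma dsum1: "(\<Sum>i\<in>(UNIV::'n::finite set). \<Sum>j\<in>(UNIV::'n set). if i=a \<and> j=b then f i j else (0::real)) = f a b"
proof -
  have "\<And>i. (\<Sum>j\<in>(UNIV::'n set). if i=a \<and> j=b then f i j else (0::real)) = (if i=a then f i b else 0)"
    by (cases "i = a") (simp_all add: sum.delta')
  then show ?thesis by (simp add: sum.delta')
qed

lemma dsum2: "(\<Sum>i\<in>(UNIV::'n::finite set). \<Sum>j\<in>(UNIV::'n set). if i=j \<and> i=a then f i j else (0::real)) = f a a"
proof -
  have "\<And>i. (\<Sum>j\<in>(UNIV::'n set). if i=j \<and> i=a then f i j else (0::real)) = (if i=a then f i i else 0)"
    by (cases "i = a") (simp_all add: sum.delta)
  then show ?thesis by (simp add: sum.delta')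
qed

lemma quad_diff:
  fixes E :: "'n::finite \<Rightarrow> 'n \<Rightarrow> bool"
  assumes "simple_graph E" "E v1 v2"
  shows "x \<bullet> (deformed_laplacian E s *v x) - x \<bullet> (deformed_laplacian (delete_edge E v1 v2) s *v x)
     = s^2 * (x$v1 * x$v1 + x$v2 * x$v2) - 2 * s * (x$v1 * x$v2)"
proof -
  have ne: "v1 \<noteq> v2" using assms by (auto simp: simple_graph_def)
  let ?M = "deformed_laplacian E s" and ?N = "deformed_laplacian (delete_edge E v1 v2) s"
  have "x \<bullet> (?M *v x) - x \<bullet> (?N *v x) = (\<Sum>i\<in>UNIV. \<Sum>j\<in>UNIV. x$i * (?M$i$j - ?N$i$j) * x$j)"
    unfolding quad_form by (simp add: sum_subtractf[symmetric] algebra_simps)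
  also have "\<dots> = (\<Sum>i\<in>UNIV. \<Sum>j\<in>UNIV. - s * (if (i=v1 \<and> j=v2) then x$i * x$j else 0)
        - s * (if (i=v2 \<and> j=v1) then x$i * x$j else 0)
        + s^2 * (if i=j \<and> i=v1 then x$i * x$j else 0) + s^2 * (if i=j \<and> i=v2 then x$i * x$j else 0))"
    unfolding entry_diff[OF assms] using ne by (intro sum.cong refl) (auto simp: algebra_simps)
  also have "\<dots> = - s * (\<Sum>i\<in>UNIV. \<Sum>j\<in>UNIV. if (i=v1 \<and> j=v2) then x$i * x$j else 0)
      - s * (\<Sum>i\<in>UNIV. \<Sum>j\<in>UNIV. if (i=v2 \<and> j=v1) then x$i * x$j else 0)
      + s^2 * (\<Sum>i\<in>UNIV. \<Sum>j\<in>UNIV. if i=j \<and> i=v1 then x$i * x$j else 0)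
      + s^2 * (\<Sum>i\<in>UNIV. \<Sum>j\<in>UNIV. if i=j \<and> i=v2 then x$i * x$j else 0)"
    by (simp add: sum.distrib sum_subtractf sum_distrib_left)
  also have "\<dots> = s^2 * (x$v1 * x$v1 + x$v2 * x$v2) - 2 * s * (x$v1 * x$v2)"
    unfolding dsum1[of v1 v2 "\<lambda>i j. x$i * x$j"] dsum1[of v2 v1 "\<lambda>i j. x$i * x$j"]
      dsum2[of v1 "\<lambda>i j. x$i * x$j"] dsum2[of v2 "\<lambda>i j. x$i * x$j"]
    by (simp add: algebra_simps)
  finally show ?thesis .
qed

lemma norm_absvec: "norm (\<chi> i. \<bar>x$i\<bar>) = norm (x::real^'n)"
  by (simp add: norm_eq_sqrt_inner inner_vec_def)

lemma abs_quad:
  fixes E :: "'n::finite \<Rightarrow> 'n \<Rightarrow> bool"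
  assumes "s \<le> 0"
  shows "x \<bullet> (deformed_laplacian E s *v x) \<le> (\<chi> i. \<bar>x$i\<bar>) \<bullet> (deformed_laplacian E s *v (\<chi> i. \<bar>x$i\<bar>))"
  unfolding quad_form
proof (intro sum_mono)
  fix i j
  let ?M = "deformed_laplacian E s"
  show "x $ i * ?M $ i $ j * x $ j \<le> (\<chi> i. \<bar>x$i\<bar>) $ i * ?M $ i $ j * (\<chi> i. \<bar>x$i\<bar>) $ j"
  proof (cases "i = j")
    case True
    then show ?thesis by (simp add: mult.commute mult.left_commute abs_mult_self_eq)
  next
    case False
    then have "?M $ i $ j \<ge> 0" using assms by (simp add: dl_entry)
    moreover have "x$i * x$j \<le> \<bar>x$i\<bar> * \<bar>x$j\<bar>" by (metis abs_ge_self abs_mult)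
    ultimately have "(x$i * x$j) * ?M $ i $ j \<le> (\<bar>x$i\<bar> * \<bar>x$j\<bar>) * ?M $ i $ j"
      by (rule mult_right_mono[rotated])
    then show ?thesis by (simp add: algebra_simps)
  qed
qed

lemma bdd_quad: "bdd_above ((\<lambda>x. x \<bullet> (B *v x)) ` {x::real^'n::finite. norm x = 1})"
proof (rule bdd_aboveI2)
  fix x :: "real^'n" assume "x \<in> {x. norm x = 1}"
  then have n: "norm x = 1" by simp
  have "x \<bullet> (B *v x) \<le> (\<Sum>i\<in>UNIV. \<Sum>j\<in>UNIV. \<bar>B$i$j\<bar>)"
    unfolding quad_form
  proof (intro sum_mono)
    fix i j
    have a: "\<bar>x$i\<bar> \<le> 1" "\<bar>x$j\<bar> \<le> 1" using component_le_norm_cart[of x] n by auto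
    have "x$i * B$i$j * x$j \<le> \<bar>x$i * B$i$j * x$j\<bar>" by simp
    also have "\<dots> = \<bar>x$i\<bar> * \<bar>B$i$j\<bar> * \<bar>x$j\<bar>" by (simp add: abs_mult)
    also have "\<dots> \<le> 1 * \<bar>B$i$j\<bar> * 1"
      using a by (intro mult_mono) auto
    finally show "x$i * B$i$j * x$j \<le> \<bar>B$i$j\<bar>" by simp
  qed
  then show "x \<bullet> (B *v x) \<le> (\<Sum>i\<in>UNIV. \<Sum>j\<in>UNIV. \<bar>B$i$j\<bar>)" .
qed

theorem theorem3p4:
  fixes E :: "'n::finite \<Rightarrow> 'n \<Rightarrow> bool" and v1 v2 :: 'n and s :: real
  assumes "simple_graph E"
    and "E v1 v2"
    and "s \<le> 0 \<or> s \<ge> 1"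
  shows "rho (deformed_laplacian E s) \<ge> rho (deformed_laplacian (delete_edge E v1 v2) s)"
proof -
  let ?M = "deformed_laplacian E s" and ?N = "deformed_laplacian (delete_edge E v1 v2) s"
  let ?S = "{x::real^'n. norm x = 1}"
  have "(SUP x\<in>?S. x \<bullet> (?N *v x)) \<le> (SUP x\<in>?S. x \<bullet> (?M *v x))"
  proof (rule cSUP_mono)
    show "?S \<noteq> {}" using norm_axis_1 by blast
    show "bdd_above ((\<lambda>x. x \<bullet> (?M *v x)) ` ?S)" by (rule bdd_quad)
  next
    fix x assume x: "x \<in> ?S"
    show "\<exists>m\<in>?S. x \<bullet> (?N *v x) \<le> m \<bullet> (?M *v m)"
    proof (cases "s \<ge> 1")
      case True
      let ?a = "x$v1" and ?b = "x$v2"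
      have "0 \<le> (?a - ?b)^2" by simp
      then have h1: "2 * (?a * ?b) \<le> ?a * ?a + ?b * ?b" by (simp add: power2_eq_square algebra_simps)
      have h2: "0 \<le> ?a * ?a + ?b * ?b" by simp
      have "s * (?a * ?a + ?b * ?b) \<le> s^2 * (?a * ?a + ?b * ?b)"
        using True h2 by (intro mult_right_mono) (auto simp: power2_eq_square)
      moreover have "s * (2 * (?a * ?b)) \<le> s * (?a * ?a + ?b * ?b)"
        using True h1 by (intro mult_left_mono) auto
      ultimately have "0 \<le> s^2 * (?a * ?a + ?b * ?b) - 2 * s * (?a * ?b)" by simp
      then show ?thesis using x quad_diff[OF assms(1,2), of x s] by auto
    next
      case False
      then have s0: "s \<le> 0" using assms(3) by simp
      let ?y = "\<chi> i. \<bar>x$i\<bar>"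
      have y: "?y \<in> ?S" using x norm_absvec[of x] by simp
      have "0 \<le> s^2 * (?y$v1 * ?y$v1 + ?y$v2 * ?y$v2)" by simp
      moreover have "0 \<le> - s * (?y$v1 * ?y$v2)" using s0 by (simp add: mult_nonpos_nonneg)
      ultimately have "0 \<le> s^2 * (?y$v1 * ?y$v1 + ?y$v2 * ?y$v2) - 2 * s * (?y$v1 * ?y$v2)" by linarith
      then have "?y \<bullet> (?N *v ?y) \<le> ?y \<bullet> (?M *v ?y)" using quad_diff[OF assms(1,2), of ?y s] by linarith
      moreover have "x \<bullet> (?N *v x) \<le> ?y \<bullet> (?N *v ?y)" by (rule abs_quad[OF s0])
      ultimately show ?thesis using y by force
    qed
  qed
  then show ?thesis unfolding rho_def by simp
qed

end
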